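(* Let $\varepsilon\in\{1,-1\}$, $z\in\mathbb{Z}$, $F_k(z)=\varepsilon^kD_k(z)$, and $n\in\mathbb{Z}^+$. For every polynomial $x(k)\in\mathbb{Z}[k]$, $$\sum_{k=0}^{n-1}L^{*}(x(k))F_k(z)\equiv 0\pmod n,$$ where $L^{*}(x(k))=(k+1)x(k)-\varepsilon(2k+1)(2z+1)x(k-1)+k\,x(k-2)$.
   Context: $D_n(z)=\sum_{k=0}^{n}\binom{n}{k}\binom{n+k}{k}z^k$ (Delannoy polynomials). *)

theory Defs
  imports Main "HOL-Computational_Algebra.Polynomial"
begin

definition delannoy :: "nat \<Rightarrow> int \<Rightarrow> int" where
  "delannoy n z = (\<Sum>k = 0..n. int (n choose k) * int ((n + k) choose k) * z ^ k)"

definition Lstar :: "int \<Rightarrow> int \<Rightarrow> int poly \<Rightarrow> int \<Rightarrow> int" where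
  "Lstar eps z x k = (k + 1) * poly x k - eps * (2 * k + 1) * (2 * z + 1) * poly x (k - 1)
                     + k * poly x (k - 2)"

end

theory Submission
  imports Defs
begin

definition aa :: "nat \<Rightarrow> nat \<Rightarrow> int" where
  "aa n k = int (n choose k) * int ((n + k) choose k)"

lemma aa_real: "k \<le> n \<Longrightarrow> real_of_int (aa n k) = fact (n+k) / (fact k * fact k * fact (n-k))"
  unfolding aa_def
  by (simp add: binomial_fact field_simps)

lemma aa_zero: "n < k \<Longrightarrow> aa n k = 0"
  by (simp add: aa_def)

lemma gen_id:
  fixes F G H a b c :: real
  assumes "G \<noteq> 0" "H \<noteq> 0" "a \<noteq> 0" "b \<noteq> 0" "c \<noteq> 0" "c = b + 1" 
  shows "(a+b+1) * (F * (2*a+b+1)*(2*a+b) / ((a*G) * (a*G) * (c*b*H))) =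
   (2*(a+b-1)+3) * (F * (2*a+b) / ((a*G) * (a*G) * (b*H)) + 2 * (F / (G * G * (c*b*H))))
   - (a+b) * (F / ((a*G) * (a*G) * H))"
  using assms(1-5) apply (simp add: field_simps)
  using assms(6) by (simp add: algebra_simps)

lemma gen_id1:
  fixes F G a :: real
  assumes "G \<noteq> 0" "a \<noteq> 0" 
  shows "(a+1) * (F * (2*a+1)*(2*a) / ((a*G) * (a*G))) =
   (2*(a-1)+3) * (F * (2*a) / ((a*G) * (a*G)) + 2 * (F / (G * G)))
   - a * 0"
  using assms by (simp add: field_simps)

lemma gen_id2:
  fixes F G a c :: real
  assumes "G \<noteq> 0" "a \<noteq> 0" "c \<noteq> 0" "c = a + 1"
  shows "c * (F * (2*c)*(2*a+1) / ((c*a*G) * (c*a*G))) =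
   (2*(a-1)+3) * (0 + 2 * (F / ((a*G) * (a*G))))
   - a * 0"
  using assms(1-3) by (simp add: field_simps)

lemma coef_gen:
  "real (n+2) * real_of_int (aa (n+2) (k+1)) =
   real (2*n+3) * (real_of_int (aa (n+1) (k+1)) + 2 * real_of_int (aa (n+1) k))
   - real (n+1) * real_of_int (aa n (k+1))"
proof (cases "k+1 \<le> n")
  case True
  then obtain m where n: "n = k+1+m" by (metis le_add_diff_inverse)
  define a where "a = real k + 1"
  define b where "b = real m + 1"
  define c where "c = real m + 2"
  have e1: "real_of_int (aa (n+2) (k+1)) = fact (2*k+m+2) * (2*a+b+1)*(2*a+b) / ((a*fact k) * (a*fact k) * (c*b*fact m))"
    using aa_real[of "k+1" "n+2"] unfolding n a_def b_def c_def
    by (simp add: algebra_simps fact_Suc numeral_eq_Suc)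
  have e2: "real_of_int (aa (n+1) (k+1)) = fact (2*k+m+2) * (2*a+b) / ((a*fact k) * (a*fact k) * (b*fact m))"
    using aa_real[of "k+1" "n+1"] unfolding n a_def b_def c_def
    by (simp add: algebra_simps fact_Suc numeral_eq_Suc)
  have e3: "real_of_int (aa (n+1) k) = fact (2*k+m+2) / ((fact k) * (fact k) * (c*b*fact m))"
    using aa_real[of "k" "n+1"] unfolding n a_def b_def c_def
    by (simp add: algebra_simps fact_Suc numeral_eq_Suc)
  have e4: "real_of_int (aa n (k+1)) = fact (2*k+m+2) / ((a*fact k) * (a*fact k) * (fact m))"
    using aa_real[of "k+1" "n"] unfolding n a_def b_def c_def
    by (simp add: algebra_simps fact_Suc numeral_eq_Suc)
  have r: "real (n+2) = a+b+1" "real (2*n+3) = 2*(a+b-1)+3" "real (n+1) = a+b"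
    unfolding n a_def b_def by simp_all
  show ?thesis unfolding e1 e2 e3 e4 r
    by (rule gen_id) (auto simp: a_def b_def c_def)
next
  case False
  then consider "k = n" | "k = n+1" | "k > n+1" by linarith
  then show ?thesis
  proof cases
    case 1
    define a where "a = real n + 1"
    have e1: "real_of_int (aa (n+2) (k+1)) = fact (2*n+1) * (2*a+1)*(2*a) / ((a*fact n) * (a*fact n))"
      using aa_real[of "k+1" "n+2"] unfolding 1 a_def
      by (simp add: algebra_simps fact_Suc numeral_eq_Suc)
    have e2: "real_of_int (aa (n+1) (k+1)) = fact (2*n+1) * (2*a) / ((a*fact n) * (a*fact n))"
      using aa_real[of "k+1" "n+1"] unfolding 1 a_def
      by (simp add: algebra_simps fact_Suc numeral_eq_Suc)
    have e3: "real_of_int (aa (n+1) k) = fact (2*n+1) / ((fact n) * (fact n))"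
      using aa_real[of "k" "n+1"] unfolding 1
      by (simp add: algebra_simps fact_Suc numeral_eq_Suc)
    have e4: "aa n (k+1) = 0" using 1 aa_zero by simp
    have r: "real (n+2) = a+1" "real (2*n+3) = 2*(a-1)+3" "real (n+1) = a"
      unfolding a_def by simp_all
    show ?thesis unfolding e1 e2 e3 e4 r of_int_0
      by (rule gen_id1) (auto simp: a_def)
  next
    case 2
    define a where "a = real n + 1"
    define c where "c = real n + 2"
    have e1: "real_of_int (aa (n+2) (k+1)) = fact (2*n+2) * (2*c)*(2*a+1) / ((c*a*fact n) * (c*a*fact n))"
      using aa_real[of "k+1" "n+2"] unfolding 2 a_def c_def
      by (simp add: algebra_simps fact_Suc numeral_eq_Suc)
    have e2: "aa (n+1) (k+1) = 0" using 2 aa_zero by simp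
    have e3: "real_of_int (aa (n+1) k) = fact (2*n+2) / ((a*fact n) * (a*fact n))"
      using aa_real[of "k" "n+1"] unfolding 2 a_def
      by (simp add: algebra_simps fact_Suc numeral_eq_Suc)
    have e4: "aa n (k+1) = 0" using 2 aa_zero by simp
    have r: "real (n+2) = c" "real (2*n+3) = 2*(a-1)+3" "real (n+1) = a"
      unfolding a_def c_def by simp_all
    show ?thesis unfolding e1 e2 e3 e4 r of_int_0
      by (rule gen_id2) (auto simp: a_def c_def)
  next
    case 3
    then show ?thesis by (simp add: aa_zero)
  qed
qed

lemma coef2: "int (n+2) * aa (n+2) (k+1) =
   int (2*n+3) * (aa (n+1) (k+1) + 2 * aa (n+1) k) - int (n+1) * aa n (k+1)"
proof -
  have "real_of_int (int (n+2) * aa (n+2) (k+1)) = real_of_int (int (2*n+3) * (aa (n+1) (k+1) + 2 * aa (n+1) k) - int (n+1) * aa n (k+1))"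
    using coef_gen[of n k] by simp
  then show ?thesis by linarith
qed


lemma D_ext: "n < N \<Longrightarrow> delannoy n z = (\<Sum>k<N. aa n k * z ^ k)"
proof -
  assume "n < N"
  have "delannoy n z = (\<Sum>k<Suc n. aa n k * z ^ k)"
    unfolding delannoy_def aa_def by (simp add: atLeast0AtMost lessThan_Suc_atMost)
  also have "\<dots> = (\<Sum>k<N. aa n k * z ^ k)"
    using \<open>n < N\<close> by (intro sum.mono_neutral_left) (auto simp: aa_zero)
  finally show ?thesis .
qed

lemma aa0: "aa n 0 = 1" by (simp add: aa_def)

lemma D_rec: "int (n+2) * delannoy (n+2) z = (2*z+1) * int (2*n+3) * delannoy (n+1) z - int (n+1) * delannoy n z"
proof -
  have c: "\<And>k. int (n+2) * aa (n+2) (k+1) * z^(k+1) = (int (2*n+3) * (aa (n+1) (k+1) + 2 * aa (n+1) k) - int (n+1) * aa n (k+1)) * z^(k+1)"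
    by (simp only: coef2)
  have "int (n+2) * delannoy (n+2) z = (\<Sum>k<Suc (n+2). int (n+2) * aa (n+2) k * z ^ k)"
    unfolding D_ext[of "n+2" "Suc (n+2)", OF lessI] sum_distrib_left by (simp only: mult.assoc)
  also have "\<dots> = int (n+2) + (\<Sum>k<n+2. int (n+2) * aa (n+2) (k+1) * z ^ (k+1))"
    by (subst sum.lessThan_Suc_shift) (simp add: aa0)
  also have "\<dots> = int (n+2) + (\<Sum>k<n+2. int (2*n+3) * aa (n+1) (k+1) * z^(k+1)
      + 2 * z * int (2*n+3) * (aa (n+1) k * z^k) - int (n+1) * aa n (k+1) * z^(k+1))"
    by (intro arg_cong2[where f="(+)"] refl sum.cong) (unfold c, simp add: algebra_simps)
  also have "\<dots> = int (n+2) + int (2*n+3) * (\<Sum>k<n+2. aa (n+1) (k+1) * z^(k+1))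
      + 2 * z * int (2*n+3) * (\<Sum>k<n+2. aa (n+1) k * z^k) - int (n+1) * (\<Sum>k<n+2. aa n (k+1) * z^(k+1))"
    by (simp only: sum.distrib sum_subtractf sum_distrib_left mult.assoc add.assoc diff_add_eq add_diff_eq)
  also have "\<dots> = int (2*n+3) * (\<Sum>k<Suc (n+2). aa (n+1) k * z^k)
      + 2 * z * int (2*n+3) * (\<Sum>k<n+2. aa (n+1) k * z^k) - int (n+1) * (\<Sum>k<Suc (n+2). aa n k * z^k)"
  proof -
    have s1: "(\<Sum>k<Suc (n+2). aa (n+1) k * z^k) = 1 + (\<Sum>k<n+2. aa (n+1) (k+1) * z^(k+1))"
      by (subst sum.lessThan_Suc_shift) (simp add: aa0)
    have s2: "(\<Sum>k<Suc (n+2). aa n k * z^k) = 1 + (\<Sum>k<n+2. aa n (k+1) * z^(k+1))"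
      by (subst sum.lessThan_Suc_shift) (simp add: aa0)
    have h: "\<And>a b d X W Z :: int. a = b - d \<Longrightarrow> a + b*X + W - d*Z = b*(1+X) + W - d*(1+Z)"
      by algebra
    show ?thesis unfolding s1 s2 by (rule h) simp
  qed
  also have "\<dots> = (2*z+1) * int (2*n+3) * delannoy (n+1) z - int (n+1) * delannoy n z"
  proof -
    have q1: "(\<Sum>k<Suc (n+2). aa (n+1) k * z^k) = delannoy (n+1) z" by (rule D_ext[symmetric]) simp
    have q2: "(\<Sum>k<n+2. aa (n+1) k * z^k) = delannoy (n+1) z" by (rule D_ext[symmetric]) simp
    have q3: "(\<Sum>k<Suc (n+2). aa n k * z^k) = delannoy n z" by (rule D_ext[symmetric]) simp
    show ?thesis unfolding q1 q2 q3 by (simp add: algebra_simps)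
  qed
  finally show ?thesis .
qed

lemma alg_helper:
  fixes t e D0 D1 D2 N z :: int
  assumes "(N + 2) * D2 = (2 * z + 1) * (2 * N + 3) * D1 - (N + 1) * D0" "e * e = 1"
  shows "(N + 2) * (t * 1 * D2) = e * (2 * N + 3) * (2 * z + 1) * (t * e * D1) - (N + 1) * (t * D0)"
  using assms by algebra

lemma closed_form:
  fixes eps z :: int and x :: "int poly"
  assumes "eps \<in> {1, -1}"
  defines "F \<equiv> (\<lambda>k. eps ^ k * delannoy k z)"
  shows "(\<Sum>k<Suc n. Lstar eps z x (int k) * F k) =
     int (Suc n) * (poly x (int n) * F n - poly x (int n - 1) * F (Suc n))"
proof (induction n)
  case 0
  have "delannoy 0 z = 1" "delannoy 1 z = 1 + 2*z" by (simp_all add: delannoy_def)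
  then show ?case by (simp add: F_def Lstar_def algebra_simps)
next
  case (Suc n)
  have e2: "eps * eps = 1" using assms(1) by auto
  have Fr: "int (n+2) * F (n+2) = eps * (2 * int n + 3) * (2*z+1) * F (n+1) - int (n+1) * F n"
  proof -
    have f1: "F (n+1) = eps^n * eps * delannoy (n+1) z" by (simp add: F_def)
    have f2: "F (n+2) = eps^n * (eps * eps) * delannoy (n+2) z" by (simp add: F_def mult.assoc)
    have f0: "F n = eps^n * delannoy n z" by (simp add: F_def)
    have d: "int (n+2) * delannoy (n+2) z = (2*z+1) * int (2*n+3) * delannoy (n+1) z - int (n+1) * delannoy n z"
      by (rule D_rec)
    have i: "int (n+2) = int n + 2" "int (2*n+3) = 2 * int n + 3" "int (n+1) = int n + 1" by simp_all
    show ?thesis unfolding f0 f1 f2 e2 using d e2 unfolding i by (rule alg_helper)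
  qed
  have L: "Lstar eps z x (int (Suc n)) = (int n + 2) * poly x (int n + 1) - eps * (2 * int n + 3) * (2 * z + 1) * poly x (int n)
                     + (int n + 1) * poly x (int n - 1)"
    by (simp add: Lstar_def algebra_simps)
  have "(\<Sum>k<Suc (Suc n). Lstar eps z x (int k) * F k) =
     int (Suc n) * (poly x (int n) * F n - poly x (int n - 1) * F (Suc n)) + Lstar eps z x (int (Suc n)) * F (Suc n)"
    using Suc.IH by simp
  also have "\<dots> = int (Suc (Suc n)) * (poly x (int (Suc n)) * F (Suc n) - poly x (int (Suc n) - 1) * F (Suc (Suc n)))"
  proof -
    have i: "int (Suc (Suc n)) = int n + 2" "int (Suc n) = int n + 1" "int n + 1 - 1 = int n"
      "n + 2 = Suc (Suc n)" "n + 1 = Suc n" by simp_all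
    have h: "\<And>N F0 F1 F2 p0 p1 pm e z :: int. (N+2)*F2 = e*(2*N+3)*(2*z+1)*F1 - (N+1)*F0 \<Longrightarrow>
       (N+1) * (p0 * F0 - pm * F1) + ((N+2)*p1 - e*(2*N+3)*(2*z+1)*p0 + (N+1)*pm) * F1
       = (N+2) * (p1 * F1 - p0 * F2)" by algebra
    show ?thesis unfolding L unfolding i using Fr unfolding i by (rule h)
  qed
  finally show ?case .
qed

theorem corollary2p3:
  fixes eps z :: int and n :: nat and x :: "int poly"
  assumes "eps \<in> {1, -1}" and "n > 0"
  shows "int n dvd (\<Sum>k<n. Lstar eps z x (int k) * (eps ^ k * delannoy k z))"
proof -
  obtain m where n: "n = Suc m" using assms(2) by (cases n) auto
  show ?thesis unfolding n using closed_form[OF assms(1), of z x m] by simp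
qed

end
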